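(* Let $c>0$ be a constant. Let $G=(V,E,L)$ be a graph with loops and suppose $V^+:=\{i\in V:\{i,i\}\in L^+\}\subseteq S$, where $S$ is a stable set of $(V,E)$ with $|V\setminus S|\le c\log|V|$. Then $\mathrm{QP}(G)$ has an SOC-representable formulation whose numbers of variables and constraints are bounded by a polynomial in $|V|$ (whose degree depends only on $c$).
   Context: A graph with loops is $G=(V,E,L)$: $V$ finite node set, $E$ a set of unordered pairs of distinct nodes, $L$ a set of loops $\{i,i\}$ partitioned as $L=L^-\cup L^+$ (minus/plus loops). $\mathrm{QP}(G):=\mathrm{conv}\{z\in\mathbb{R}^{V\cup E\cup L}: z_{ii}\ge z_i^2\ \forall\{i,i\}\in L^+,\ z_{ii}\le z_i^2\ \forall \{i,i\}\in L^-,\ z_{ij}=z_iz_j\ \forall \{i,j\}\in E,\ z_i\in[0,1]\ \forall i\in V\}$. A convex set is SOC-representable if it is the projection of a set described by finitely many linear constraints and (rotated) second-order cone constraints composed with affine maps. *)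

theory Defs
  imports "HOL-Analysis.Analysis" "HOL-Computational_Algebra.Polynomial"
begin

definition conv_fun :: "('i \<Rightarrow> real) set \<Rightarrow> ('i \<Rightarrow> real) set" where
  "conv_fun X = {y. \<exists>(n::nat) (u::nat \<Rightarrow> real) (x::nat \<Rightarrow> ('i \<Rightarrow> real)).
      (\<forall>k<n. 0 \<le> u k \<and> x k \<in> X) \<and> (\<Sum>k<n. u k) = 1 \<and>
      y = (\<lambda>i. \<Sum>k<n. u k * x k i)}"

text \<open>The original variables are indexed by a finite set I (points are functions
 vanishing outside I); there are p auxiliary variables w 0, ..., w (p-1).
 An affine form is given by coefficients on x, coefficients on w, and a constant.\<close>

type_synonym 'i affform = "('i \<Rightarrow> real) \<times> (nat \<Rightarrow> real) \<times> real"

definition aff_eval :: "'i set \<Rightarrow> nat \<Rightarrow> 'i affform \<Rightarrow> ('i \<Rightarrow> real) \<Rightarrow> (nat \<Rightarrow> real) \<Rightarrow> real" where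
  "aff_eval I p f x w = (case f of (a, b, c) \<Rightarrow> (\<Sum>i\<in>I. a i * x i) + (\<Sum>j<p. b j * w j) + c)"

datatype 'i soc_constr =
    LinIneq "'i affform"
  | SOC "'i affform list" "'i affform"
  | RSOC "'i affform list" "'i affform" "'i affform"

fun soc_sat :: "'i set \<Rightarrow> nat \<Rightarrow> 'i soc_constr \<Rightarrow> ('i \<Rightarrow> real) \<Rightarrow> (nat \<Rightarrow> real) \<Rightarrow> bool" where
  "soc_sat I p (LinIneq f) x w = (0 \<le> aff_eval I p f x w)"
| "soc_sat I p (SOC gs t) x w =
     (sqrt (\<Sum>g\<leftarrow>gs. (aff_eval I p g x w)\<^sup>2) \<le> aff_eval I p t x w)"
| "soc_sat I p (RSOC gs u v) x w =
     ((\<Sum>g\<leftarrow>gs. (aff_eval I p g x w)\<^sup>2) \<le> 2 * aff_eval I p u x w * aff_eval I p v x w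
      \<and> 0 \<le> aff_eval I p u x w \<and> 0 \<le> aff_eval I p v x w)"

definition soc_rep :: "'i set \<Rightarrow> nat \<Rightarrow> nat \<Rightarrow> ('i \<Rightarrow> real) set \<Rightarrow> bool" where
  "soc_rep I nv nc X \<longleftrightarrow> (\<exists>(p::nat) (cs::'i soc_constr list).
      card I + p \<le> nv \<and> length cs \<le> nc \<and>
      X = {x. (\<forall>k. k \<notin> I \<longrightarrow> x k = 0) \<and>
              (\<exists>w. \<forall>con\<in>set cs. soc_sat I p con x w)})"

text \<open>Nodes V, edges E (unordered pairs of distinct nodes), minus loops Lm and
 plus loops Lp (loops {i,i}, which as HOL sets equal {i}).\<close>

definition graph_with_loops :: "'a set \<Rightarrow> 'a set set \<Rightarrow> 'a set set \<Rightarrow> 'a set set \<Rightarrow> bool" where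
  "graph_with_loops V E Lm Lp \<longleftrightarrow> finite V \<and>
     (\<forall>e\<in>E. \<exists>i j. i \<in> V \<and> j \<in> V \<and> i \<noteq> j \<and> e = {i, j}) \<and>
     (\<forall>l\<in>Lm \<union> Lp. \<exists>i\<in>V. l = {i, i}) \<and> Lm \<inter> Lp = {}"

definition stable_set :: "'a set \<Rightarrow> 'a set set \<Rightarrow> 'a set \<Rightarrow> bool" where
  "stable_set V E S \<longleftrightarrow> S \<subseteq> V \<and> (\<forall>i\<in>S. \<forall>j\<in>S. {i, j} \<notin> E)"

datatype 'a coord = Node 'a | Pair "'a set"

definition QP_index :: "'a set \<Rightarrow> 'a set set \<Rightarrow> 'a set set \<Rightarrow> 'a set set \<Rightarrow> 'a coord set" where
  "QP_index V E Lm Lp = Node ` V \<union> Pair ` (E \<union> Lm \<union> Lp)"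

definition QP :: "'a set \<Rightarrow> 'a set set \<Rightarrow> 'a set set \<Rightarrow> 'a set set \<Rightarrow> ('a coord \<Rightarrow> real) set" where
  "QP V E Lm Lp = conv_fun {z. (\<forall>k. k \<notin> QP_index V E Lm Lp \<longrightarrow> z k = 0) \<and>
      (\<forall>i. {i, i} \<in> Lp \<longrightarrow> z (Pair {i, i}) \<ge> (z (Node i))\<^sup>2) \<and>
      (\<forall>i. {i, i} \<in> Lm \<longrightarrow> z (Pair {i, i}) \<le> (z (Node i))\<^sup>2) \<and>
      (\<forall>i j. {i, j} \<in> E \<longrightarrow> z (Pair {i, j}) = z (Node i) * z (Node j)) \<and>
      (\<forall>i\<in>V. 0 \<le> z (Node i) \<and> z (Node i) \<le> 1)}"

end

theory Submission
  imports Defs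
begin

definition cvx :: "('i \<Rightarrow> real) set \<Rightarrow> bool" where
  "cvx C \<longleftrightarrow> (\<forall>x\<in>C. \<forall>y\<in>C. \<forall>a. 0 \<le> a \<and> a \<le> 1 \<longrightarrow> (\<lambda>k. a * x k + (1-a) * y k) \<in> C)"

lemma cvxD:
  assumes "cvx C" "x \<in> C" "y \<in> C" "0 \<le> a" "a \<le> 1"
  shows "(\<lambda>k. a * x k + (1-a) * y k) \<in> C"
proof -
  have h: "\<forall>x\<in>C. \<forall>y\<in>C. \<forall>a. 0 \<le> a \<and> a \<le> 1 \<longrightarrow> (\<lambda>k. a * x k + (1-a) * y k) \<in> C"
    using assms(1) by (simp only: cvx_def)
  show ?thesis using h[rule_format, OF assms(2) assms(3) conjI[OF assms(4) assms(5)]] .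
qed

lemma cvx_sum:
  assumes "cvx C" "finite S" "sum a S = 1" "\<And>i. i\<in>S \<Longrightarrow> 0 \<le> a i" "\<And>i. i\<in>S \<Longrightarrow> y i \<in> C"
  shows "(\<lambda>k. \<Sum>i\<in>S. a i * y i k) \<in> C"
  using assms(2,3,4,5)
proof (induction S arbitrary: a rule: finite_induct)
  case empty then show ?case by simp
next
  case (insert i S)
  have s0: "0 \<le> sum a S" using insert by (simp add: sum_nonneg)
  have ai: "a i = 1 - sum a S" using insert by simp
  show ?case
  proof (cases "sum a S = 0")
    case True
    then have "\<forall>j\<in>S. a j = 0" using insert sum_nonneg_eq_0_iff[of S a] by auto
    then have "(\<lambda>k. \<Sum>j\<in>insert i S. a j * y j k) = y i" using insert True by (auto simp: ai)
    then show ?thesis using insert by simp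
  next
    case False
    then have sp: "0 < sum a S" using s0 by simp
    let ?b = "\<lambda>j. a j / sum a S"
    have "sum ?b S = 1" using sp by (simp add: sum_divide_distrib[symmetric])
    then have P: "(\<lambda>k. \<Sum>j\<in>S. ?b j * y j k) \<in> C" using insert sp by (intro insert.IH) auto
    have "0 \<le> a i" using insert.prems by auto
    moreover have "a i \<le> 1" using s0 ai by linarith
    ultimately
    have "(\<lambda>k. a i * y i k + (1 - a i) * (\<Sum>j\<in>S. ?b j * y j k)) \<in> C"
      using assms(1) P insert.prems by (intro cvxD) auto
    moreover have "(\<lambda>k. a i * y i k + (1 - a i) * (\<Sum>j\<in>S. ?b j * y j k)) = (\<lambda>k. \<Sum>j\<in>insert i S. a j * y j k)"
    proof
      fix k
      have "(1 - a i) * (\<Sum>j\<in>S. ?b j * y j k) = (\<Sum>j\<in>S. a j * y j k)"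
        using sp by (simp add: ai sum_distrib_left)
      then show "a i * y i k + (1 - a i) * (\<Sum>j\<in>S. ?b j * y j k) = (\<Sum>j\<in>insert i S. a j * y j k)"
        using insert by simp
    qed
    ultimately show ?thesis by simp
  qed
qed

lemma conv_fun_sub: "X \<subseteq> conv_fun X"
proof
  fix y assume "y \<in> X"
  then show "y \<in> conv_fun X" unfolding conv_fun_def
    by (intro CollectI exI[of _ "1::nat"] exI[of _ "\<lambda>_. 1"] exI[of _ "\<lambda>_. y"]) auto
qed

lemma conv_fun_min: assumes "X \<subseteq> C" "cvx C" shows "conv_fun X \<subseteq> C"
proof
  fix y assume "y \<in> conv_fun X"
  then have "\<exists>(n::nat) u x. (\<forall>k<n. 0 \<le> u k \<and> x k \<in> X) \<and> (\<Sum>k<n. u k) = 1 \<and> y = (\<lambda>i. \<Sum>k<n. u k * x k i)"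
    unfolding conv_fun_def by simp
  then obtain n :: nat and u x where h: "\<forall>k<n. 0 \<le> u k \<and> x k \<in> X" "(\<Sum>k<n. u k) = 1" "y = (\<lambda>i. \<Sum>k<n. u k * x k i)"
    by (elim exE conjE)
  have "(\<lambda>i. \<Sum>k\<in>{..<n}. u k * x k i) \<in> C"
    using assms(2) by (rule cvx_sum) (use h(1,2) assms(1) in auto)
  then show "y \<in> C" unfolding h(3) .
qed

lemma cvx_conv_fun: "cvx (conv_fun X)"
  unfolding cvx_def
proof (intro ballI allI impI)
  fix y1 y2 a assume y1: "y1 \<in> conv_fun X" and y2: "y2 \<in> conv_fun X" and a: "0 \<le> a \<and> a \<le> (1::real)"
  obtain n1 :: nat and u1 x1 where h1: "\<forall>k<n1. 0 \<le> u1 k \<and> x1 k \<in> X" "(\<Sum>k<n1. u1 k) = 1" "y1 = (\<lambda>i. \<Sum>k<n1. u1 k * x1 k i)"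
    using y1 unfolding conv_fun_def by blast
  obtain n2 :: nat and u2 x2 where h2: "\<forall>k<n2. 0 \<le> u2 k \<and> x2 k \<in> X" "(\<Sum>k<n2. u2 k) = 1" "y2 = (\<lambda>i. \<Sum>k<n2. u2 k * x2 k i)"
    using y2 unfolding conv_fun_def by blast
  define u where "u k = (if k < n1 then a * u1 k else (1-a) * u2 (k - n1))" for k
  define x where "x k = (if k < n1 then x1 k else x2 (k - n1))" for k
  have split: "(\<Sum>k<n1+n2. f k) = (\<Sum>k<n1. f k) + (\<Sum>k<n2. f (k + n1))" for f :: "nat \<Rightarrow> real"
  proof -
    have "{..<n1+n2} = {..<n1} \<union> {n1..<n1+n2}" by auto
    then have "(\<Sum>k<n1+n2. f k) = sum f ({..<n1} \<union> {n1..<n1+n2})" by simp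
    also have "\<dots> = (\<Sum>k<n1. f k) + (\<Sum>k\<in>{n1..<n1+n2}. f k)"
      by (rule sum.union_disjoint) auto
    also have "(\<Sum>k\<in>{n1..<n1+n2}. f k) = (\<Sum>k\<in>{0+n1..<n2+n1}. f k)" by (simp add: add.commute)
    also have "\<dots> = (\<Sum>k\<in>{0..<n2}. f (k + n1))" by (rule sum.shift_bounds_nat_ivl)
    finally show ?thesis by (simp add: lessThan_atLeast0)
  qed
  have "\<forall>k<n1+n2. 0 \<le> u k \<and> x k \<in> X" using h1 h2 a by (auto simp: u_def x_def)
  moreover have "(\<Sum>k<n1+n2. u k) = 1"
    using h1 h2 by (simp add: split u_def sum_distrib_left[symmetric])
  moreover have "(\<lambda>k. a * y1 k + (1-a) * y2 k) = (\<lambda>i. \<Sum>k<n1+n2. u k * x k i)"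
    using h1 h2 by (simp add: split u_def x_def sum_distrib_left mult.assoc)
  ultimately show "(\<lambda>k. a * y1 k + (1-a) * y2 k) \<in> conv_fun X"
    unfolding conv_fun_def by blast
qed

lemma conv_fun_mono: "X \<subseteq> Y \<Longrightarrow> conv_fun X \<subseteq> conv_fun Y"
proof -
  assume "X \<subseteq> Y"
  then have "X \<subseteq> conv_fun Y" using conv_fun_sub[of Y] by (rule subset_trans)
  then show ?thesis using cvx_conv_fun[of Y] by (rule conv_fun_min)
qed

locale qpG =
  fixes V :: "'a set" and E Lm Lp :: "'a set set" and S :: "'a set"
  assumes gwl: "graph_with_loops V E Lm Lp"
    and stab: "stable_set V E S"
    and plS: "{i\<in>V. {i, i} \<in> Lp} \<subseteq> S"
begin

definition "I = QP_index V E Lm Lp"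
definition "T = V - S"

lemma finV: "finite V" using gwl by (simp add: graph_with_loops_def)
lemma SV: "S \<subseteq> V" using stab by (simp add: stable_set_def)
lemma stabE: "i \<in> S \<Longrightarrow> j \<in> S \<Longrightarrow> {i, j} \<notin> E" using stab by (simp add: stable_set_def)
lemma edgeE: "e \<in> E \<Longrightarrow> \<exists>i j. i \<in> V \<and> j \<in> V \<and> i \<noteq> j \<and> e = {i, j}"
  using gwl by (simp add: graph_with_loops_def)
lemma edge_ne: "{i, j} \<in> E \<Longrightarrow> i \<noteq> j"
  using edgeE by (metis doubleton_eq_iff insert_absorb2)
lemma edge_V: "{i, j} \<in> E \<Longrightarrow> i \<in> V \<and> j \<in> V"
  using edgeE by (metis doubleton_eq_iff)
lemma loopE: "l \<in> Lm \<union> Lp \<Longrightarrow> \<exists>i\<in>V. l = {i}"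
  using gwl by (simp add: graph_with_loops_def)
lemma loopV: "{i} \<in> Lm \<union> Lp \<Longrightarrow> i \<in> V"
  using loopE by blast
lemma LmLp: "{i} \<in> Lm \<Longrightarrow> {i} \<notin> Lp"
  using gwl by (auto simp: graph_with_loops_def)
lemma LpS: "{i} \<in> Lp \<Longrightarrow> i \<in> S"
  using plS loopV by auto
lemma loop_notE: "{i} \<notin> E"
  using edgeE by (metis doubleton_eq_iff insert_absorb2)
lemma finE: "finite E"
proof -
  have "E \<subseteq> (\<lambda>(i,j). {i,j}) ` (V \<times> V)" using edgeE by fastforce
  then show ?thesis using finV by (meson finite_SigmaI finite_imageI finite_subset)
qed
lemma finL: "finite (Lm \<union> Lp)"
proof -
  have "Lm \<union> Lp \<subseteq> (\<lambda>i. {i}) ` V" using loopE by fastforce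
  then show ?thesis using finV by (meson finite_imageI finite_subset)
qed
lemma finI: "finite I"
  using finV finE finL by (simp add: I_def QP_index_def)

lemma Node_I: "Node i \<in> I \<longleftrightarrow> i \<in> V" by (auto simp: I_def QP_index_def)
lemma Pair_I: "Pair e \<in> I \<longleftrightarrow> e \<in> E \<union> Lm \<union> Lp" by (auto simp: I_def QP_index_def)

definition "vanish z \<longleftrightarrow> (\<forall>k. k \<notin> I \<longrightarrow> z k = 0)"

definition Gen :: "('a coord \<Rightarrow> real) set" where
 "Gen = {z. (\<forall>k. k \<notin> QP_index V E Lm Lp \<longrightarrow> z k = 0) \<and>
      (\<forall>i. {i, i} \<in> Lp \<longrightarrow> z (Pair {i, i}) \<ge> (z (Node i))\<^sup>2) \<and>
      (\<forall>i. {i, i} \<in> Lm \<longrightarrow> z (Pair {i, i}) \<le> (z (Node i))\<^sup>2) \<and>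
      (\<forall>i j. {i, j} \<in> E \<longrightarrow> z (Pair {i, j}) = z (Node i) * z (Node j)) \<and>
      (\<forall>i\<in>V. 0 \<le> z (Node i) \<and> z (Node i) \<le> 1)}"

lemma QP_Gen: "QP V E Lm Lp = conv_fun Gen"
  unfolding QP_def Gen_def ..

definition Q :: "('a coord \<Rightarrow> real) set" where
 "Q = {z. vanish z \<and> (\<forall>i\<in>V. 0 \<le> z (Node i) \<and> z (Node i) \<le> 1) \<and>
      (\<forall>i. {i} \<in> Lp \<longrightarrow> z (Pair {i}) \<ge> (z (Node i))\<^sup>2) \<and>
      (\<forall>i. {i} \<in> Lm \<longrightarrow> z (Pair {i}) \<le> z (Node i)) \<and>
      (\<forall>i j. {i, j} \<in> E \<longrightarrow> z (Pair {i, j}) = z (Node i) * z (Node j))}"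

definition R :: "('a coord \<Rightarrow> real) set" where
 "R = Q \<inter> {z. \<forall>j\<in>T. z (Node j) = 0 \<or> z (Node j) = 1}"

lemma Gen_Q: "Gen \<subseteq> Q"
proof
  fix z assume z: "z \<in> Gen"
  have "z (Pair {i}) \<le> z (Node i)" if "{i} \<in> Lm" for i
  proof -
    have "i \<in> V" using that loopV by blast
    then have "0 \<le> z (Node i)" "z (Node i) \<le> 1" using z by (auto simp: Gen_def)
    then have "(z (Node i))\<^sup>2 \<le> z (Node i)" by (simp add: power2_eq_square mult_left_le)
    moreover have "z (Pair {i}) \<le> (z (Node i))\<^sup>2" using z that by (auto simp: Gen_def)
    ultimately show ?thesis by linarith
  qed
  then show "z \<in> Q" using z unfolding Gen_def Q_def vanish_def I_def by auto
qed

lemma R_Q: "R \<subseteq> Q" by (auto simp: R_def)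

definition bad :: "('a coord \<Rightarrow> real) \<Rightarrow> 'a set" where
  "bad z = {i\<in>V. 0 < z (Node i) \<and> z (Node i) < 1 \<and> (i \<notin> S \<or> {i} \<in> Lm)}"

lemma good: assumes "z \<in> Q" "bad z = {}" shows "z \<in> Gen \<inter> R"
proof -
  have bin: "z (Node i) = 0 \<or> z (Node i) = 1" if "i \<in> V" "i \<notin> S \<or> {i} \<in> Lm" for i
    using assms that unfolding Q_def bad_def by force
  have "z (Pair {i}) \<le> (z (Node i))\<^sup>2" if "{i} \<in> Lm" for i
  proof -
    have "i \<in> V" using that loopV by blast
    then have "z (Node i) = 0 \<or> z (Node i) = 1" using bin[of i] that by blast
    then have "(z (Node i))\<^sup>2 = z (Node i)" by auto
    then show ?thesis using assms that by (auto simp: Q_def)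
  qed
  then have "z \<in> Gen" using assms unfolding Gen_def Q_def vanish_def I_def by auto
  moreover have "z \<in> R" using assms bin unfolding R_def T_def by auto
  ultimately show ?thesis by simp
qed

definition md :: "('a coord \<Rightarrow> real) \<Rightarrow> 'a \<Rightarrow> real \<Rightarrow> real \<Rightarrow> 'a coord \<Rightarrow> real" where
  "md z i a s k = (if k = Node i then a else if k = Pair {i} then s else
      (case k of Pair e \<Rightarrow> if e \<in> E \<and> i \<in> e then a * z (Node (the_elem (e - {i}))) else z k
        | Node j \<Rightarrow> z k))"

lemma md_Node: "j \<noteq> i \<Longrightarrow> md z i a s (Node j) = z (Node j)"
  by (simp add: md_def)
lemma md_Node_i: "md z i a s (Node i) = a"
  by (simp add: md_def)
lemma md_loop_i: "md z i a s (Pair {i}) = s"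
  by (simp add: md_def)
lemma md_loop: "j \<noteq> i \<Longrightarrow> md z i a s (Pair {j}) = z (Pair {j})"
  using loop_notE by (simp add: md_def)
lemma md_edge_i: "{i, j} \<in> E \<Longrightarrow> md z i a s (Pair {i, j}) = a * z (Node j)"
proof -
  assume e: "{i, j} \<in> E"
  then have "i \<noteq> j" by (rule edge_ne)
  then have "{i, j} \<noteq> {i}" "{i,j} - {i} = {j}" by auto
  then show ?thesis using e by (simp add: md_def)
qed
lemma md_edge_other: "{a, b} \<in> E \<Longrightarrow> i \<noteq> a \<Longrightarrow> i \<noteq> b \<Longrightarrow> md z i x s (Pair {a, b}) = z (Pair {a, b})"
  using edge_ne by (auto simp: md_def)
lemma md_other: "k \<notin> I \<Longrightarrow> i \<in> V \<Longrightarrow> (\<forall>e. k = Pair e \<longrightarrow> e \<noteq> {i}) \<Longrightarrow> md z i a s k = z k"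
  by (cases k) (auto simp: md_def Node_I Pair_I)

end

context qpG begin

lemma md_Q:
  assumes z: "z \<in> Q" and i: "i \<in> V" "{i} \<notin> Lp" and a: "0 \<le> a" "a \<le> 1"
    and sm: "{i} \<in> Lm \<Longrightarrow> s \<le> a" and sn: "{i} \<notin> Lm \<Longrightarrow> s = z (Pair {i})"
  shows "md z i a s \<in> Q"
proof -
  let ?A = "md z i a s"
  have zv: "vanish z" and zn: "\<forall>j\<in>V. 0 \<le> z (Node j) \<and> z (Node j) \<le> 1"
    and zp: "\<forall>j. {j} \<in> Lp \<longrightarrow> z (Pair {j}) \<ge> (z (Node j))\<^sup>2"
    and zm: "\<forall>j. {j} \<in> Lm \<longrightarrow> z (Pair {j}) \<le> z (Node j)"
    and ze: "\<forall>p q. {p, q} \<in> E \<longrightarrow> z (Pair {p, q}) = z (Node p) * z (Node q)"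
    using z by (auto simp: Q_def)
  have "vanish ?A" unfolding vanish_def
  proof (intro allI impI)
    fix k assume k: "k \<notin> I"
    show "?A k = 0"
    proof (cases "k = Pair {i}")
      case True
      then have "{i} \<notin> Lm" using k Pair_I by auto
      then show ?thesis using True sn zv k by (simp add: md_loop_i vanish_def)
    next
      case False
      then have "?A k = z k" using k i by (intro md_other) auto
      then show ?thesis using zv k by (simp add: vanish_def)
    qed
  qed
  moreover have "\<forall>j\<in>V. 0 \<le> ?A (Node j) \<and> ?A (Node j) \<le> 1"
  proof
    fix j assume "j \<in> V"
    then show "0 \<le> ?A (Node j) \<and> ?A (Node j) \<le> 1"
      using zn a by (cases "j = i") (simp_all add: md_Node_i md_Node)
  qed
  moreover have "\<forall>j. {j} \<in> Lp \<longrightarrow> ?A (Pair {j}) \<ge> (?A (Node j))\<^sup>2"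
  proof (intro allI impI)
    fix j assume j: "{j} \<in> Lp"
    then have "j \<noteq> i" using i by auto
    then show "?A (Pair {j}) \<ge> (?A (Node j))\<^sup>2" using zp j by (simp add: md_loop md_Node)
  qed
  moreover have "\<forall>j. {j} \<in> Lm \<longrightarrow> ?A (Pair {j}) \<le> ?A (Node j)"
  proof (intro allI impI)
    fix j assume j: "{j} \<in> Lm"
    show "?A (Pair {j}) \<le> ?A (Node j)"
    proof (cases "j = i")
      case True then show ?thesis using sm j by (simp add: md_loop_i md_Node_i)
    next
      case False then show ?thesis using zm j by (simp add: md_loop md_Node)
    qed
  qed
  moreover have "\<forall>p q. {p, q} \<in> E \<longrightarrow> ?A (Pair {p, q}) = ?A (Node p) * ?A (Node q)"
  proof (intro allI impI)
    fix p q assume e: "{p, q} \<in> E"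
    then have pq: "p \<noteq> q" by (rule edge_ne)
    show "?A (Pair {p, q}) = ?A (Node p) * ?A (Node q)"
    proof (cases "p = i")
      case True then show ?thesis using e pq by (simp add: md_edge_i md_Node md_Node_i)
    next
      case False
      show ?thesis
      proof (cases "q = i")
        case True
        have e': "{i, p} \<in> E" using e True by (simp add: insert_commute)
        have "?A (Pair {p, q}) = ?A (Pair {i, p})" using True by (simp add: insert_commute)
        also have "\<dots> = a * z (Node p)" using e' by (rule md_edge_i)
        finally show ?thesis using True False by (simp add: md_Node md_Node_i)
      next
        case False2: False
        then show ?thesis using False e ze by (simp add: md_edge_other md_Node)
      qed
    qed
  qed
  ultimately show ?thesis by (simp add: Q_def)
qed

lemma md_comb:
  assumes z: "z \<in> Q" and i: "i \<in> V"
    and s: "t * sA + (1 - t) * sB = z (Pair {i})" and t: "t = z (Node i)"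
  shows "z = (\<lambda>k. t * md z i 1 sA k + (1 - t) * md z i 0 sB k)"
proof
  fix k
  have ze: "\<forall>p q. {p, q} \<in> E \<longrightarrow> z (Pair {p, q}) = z (Node p) * z (Node q)"
    using z by (auto simp: Q_def)
  show "z k = t * md z i 1 sA k + (1 - t) * md z i 0 sB k"
  proof (cases k)
    case (Node j)
    then show ?thesis using t by (cases "j = i") (auto simp: md_Node md_Node_i algebra_simps)
  next
    case (Pair e)
    show ?thesis
    proof (cases "e = {i}")
      case True then show ?thesis using Pair s by (simp add: md_loop_i)
    next
      case False
      show ?thesis
      proof (cases "e \<in> E \<and> i \<in> e")
        case True
        then obtain j where e: "e = {i, j}" using edgeE by blast
        then have "{i, j} \<in> E" using True by simp
        then have "md z i 1 sA k = z (Node j)" "md z i 0 sB k = 0" using Pair e by (simp_all add: md_edge_i)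
        then show ?thesis using ze \<open>{i, j} \<in> E\<close> Pair e t by (simp add: algebra_simps)
      next
        case False2: False
        then have "md z i x s k = z k" for x s using False Pair by (auto simp: md_def)
        then show ?thesis by (simp add: algebra_simps)
      qed
    qed
  qed
qed

lemma bad_md: assumes "a = 0 \<or> a = 1" shows "bad (md z i a s) \<subseteq> bad z - {i}"
proof
  fix j assume j: "j \<in> bad (md z i a s)"
  have "j \<noteq> i" using j assms by (auto simp: bad_def md_Node_i)
  then show "j \<in> bad z - {i}" using j by (simp add: bad_def md_Node)
qed

lemma finite_bad: "finite (bad z)" using finV by (simp add: bad_def)

lemma Q_hull: "Q \<subseteq> conv_fun (Gen \<inter> R)"
proof
  fix z assume "z \<in> Q"
  then show "z \<in> conv_fun (Gen \<inter> R)"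
  proof (induction "card (bad z)" arbitrary: z rule: less_induct)
    case less
    show ?case
    proof (cases "bad z = {}")
      case True
      then show ?thesis using good less.prems conv_fun_sub by blast
    next
      case False
      then obtain i where ib: "i \<in> bad z" by blast
      define t where "t = z (Node i)"
      define sA where "sA = (if {i} \<in> Lm then 1 + (z (Pair {i}) - t) else z (Pair {i}))"
      define sB where "sB = (if {i} \<in> Lm then z (Pair {i}) - t else z (Pair {i}))"
      have iV: "i \<in> V" and t01: "0 < t" "t < 1" and iS: "i \<notin> S \<or> {i} \<in> Lm"
        using ib by (auto simp: bad_def t_def)
      have iLp: "{i} \<notin> Lp" using iS LpS LmLp by blast
      have zm: "{i} \<in> Lm \<Longrightarrow> z (Pair {i}) \<le> t" using less.prems by (auto simp: Q_def t_def)
      have AQ: "md z i 1 sA \<in> Q" using less.prems iV iLp zm by (intro md_Q) (auto simp: sA_def)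
      have BQ: "md z i 0 sB \<in> Q" using less.prems iV iLp zm by (intro md_Q) (auto simp: sB_def)
      have comb: "z = (\<lambda>k. t * md z i 1 sA k + (1 - t) * md z i 0 sB k)"
        using less.prems iV by (intro md_comb) (auto simp: sA_def sB_def t_def algebra_simps)
      have "card (bad (md z i 1 sA)) < card (bad z)"
        using bad_md[of 1 z i sA] ib finite_bad by (intro psubset_card_mono) auto
      then have A: "md z i 1 sA \<in> conv_fun (Gen \<inter> R)" using less.hyps AQ by blast
      have "card (bad (md z i 0 sB)) < card (bad z)"
        using bad_md[of 0 z i sB] ib finite_bad by (intro psubset_card_mono) auto
      then have B: "md z i 0 sB \<in> conv_fun (Gen \<inter> R)" using less.hyps BQ by blast
      have "(\<lambda>k. t * md z i 1 sA k + (1 - t) * md z i 0 sB k) \<in> conv_fun (Gen \<inter> R)"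
        using cvx_conv_fun[of "Gen \<inter> R"] A B t01 by (intro cvxD) auto
      then show ?thesis using comb by simp
    qed
  qed
qed

end

lemma rsoc_cvx:
  fixes x1 x2 l1 l2 s1 s2 a :: real
  assumes h1: "x1\<^sup>2 \<le> l1 * s1" and h2: "x2\<^sup>2 \<le> l2 * s2"
    and p: "0 \<le> l1" "0 \<le> s1" "0 \<le> l2" "0 \<le> s2" and a: "0 \<le> a" "a \<le> 1"
  shows "(a * x1 + (1-a) * x2)\<^sup>2 \<le> (a * l1 + (1-a) * l2) * (a * s1 + (1-a) * s2)"
proof -
  define b where "b = 1 - a"
  have b: "0 \<le> b" using a by (simp add: b_def)
  have "(x1 * x2)\<^sup>2 \<le> (l1 * s1) * (l2 * s2)"
  proof -
    have "(x1 * x2)\<^sup>2 = x1\<^sup>2 * x2\<^sup>2" by (simp add: power_mult_distrib)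
    also have "\<dots> \<le> (l1 * s1) * (l2 * s2)" using h1 h2 p by (intro mult_mono) auto
    finally show ?thesis .
  qed
  also have "\<dots> = (l1 * s2) * (l2 * s1)" by (simp add: algebra_simps)
  also have "\<dots> \<le> ((l1 * s2 + l2 * s1) / 2)\<^sup>2"
  proof -
    have "0 \<le> (l1 * s2 - l2 * s1)\<^sup>2" by simp
    then show ?thesis by (simp add: power2_eq_square algebra_simps)
  qed
  finally have "(x1 * x2)\<^sup>2 \<le> ((l1 * s2 + l2 * s1) / 2)\<^sup>2" .
  then have "\<bar>x1 * x2\<bar> \<le> \<bar>(l1 * s2 + l2 * s1) / 2\<bar>" using abs_le_square_iff by blast
  then have c: "2 * (x1 * x2) \<le> l1 * s2 + l2 * s1" using p by (simp add: abs_le_iff)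
  have "(a * x1 + b * x2)\<^sup>2 = a\<^sup>2 * x1\<^sup>2 + 2 * a * b * (x1 * x2) + b\<^sup>2 * x2\<^sup>2"
    by (simp add: power2_eq_square algebra_simps)
  also have "\<dots> \<le> a\<^sup>2 * (l1 * s1) + a * b * (l1 * s2 + l2 * s1) + b\<^sup>2 * (l2 * s2)"
  proof -
    have "a\<^sup>2 * x1\<^sup>2 \<le> a\<^sup>2 * (l1 * s1)" using h1 by (simp add: mult_left_mono)
    moreover have "b\<^sup>2 * x2\<^sup>2 \<le> b\<^sup>2 * (l2 * s2)" using h2 by (simp add: mult_left_mono)
    moreover have "(a * b) * (2 * (x1 * x2)) \<le> (a * b) * (l1 * s2 + l2 * s1)"
      using c a b by (intro mult_left_mono) auto
    ultimately show ?thesis by (simp add: algebra_simps)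
  qed
  also have "\<dots> = (a * l1 + b * l2) * (a * s1 + b * s2)"
    by (simp add: power2_eq_square algebra_simps)
  finally show ?thesis by (simp add: b_def)
qed

context qpG begin

definition PC :: "'a set \<Rightarrow> 'a coord \<Rightarrow> real \<Rightarrow> ('a coord \<Rightarrow> real) \<Rightarrow> bool" where
 "PC A k l u = (case k of
    Node i \<Rightarrow> (if i \<in> S then 0 \<le> u (Node i) \<and> u (Node i) \<le> l else u (Node i) = (if i \<in> A then l else 0))
  | Pair e \<Rightarrow> (if e \<in> Lp then (u (Node (the_elem e)))\<^sup>2 \<le> l * u (Pair e) \<and> 0 \<le> l \<and> 0 \<le> u (Pair e)
     else if e \<in> Lm then (if the_elem e \<in> S then u (Pair e) \<le> u (Node (the_elem e))
                          else u (Pair e) \<le> (if the_elem e \<in> A then l else 0))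
     else if e \<inter> S = {} then u (Pair e) = (if e \<subseteq> A then l else 0)
     else u (Pair e) = (if the_elem (e - S) \<in> A then u (Node (the_elem (e \<inter> S))) else 0)))"

definition Feas :: "('a coord \<Rightarrow> real) \<Rightarrow> ('a set \<Rightarrow> real) \<Rightarrow> ('a set \<Rightarrow> 'a coord \<Rightarrow> real) \<Rightarrow> bool" where
 "Feas z l v \<longleftrightarrow> (\<forall>A\<in>Pow T. 0 \<le> l A \<and> (\<forall>k\<in>I. PC A k (l A) (v A))) \<and>
    (\<forall>k\<in>I. z k = (\<Sum>A\<in>Pow T. v A k)) \<and> (\<Sum>A\<in>Pow T. l A) = 1"

definition "Proj = {z. vanish z \<and> (\<exists>l v. Feas z l v)}"

lemma finT: "finite T" using finV by (simp add: T_def)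

lemma edge_cases:
  assumes "e \<in> E"
  obtains (TT) a b where "e = {a, b}" "a \<in> T" "b \<in> T" "a \<noteq> b" "e \<inter> S = {}"
  | (ST) a b where "e = {a, b}" "a \<in> S" "b \<in> T" "the_elem (e \<inter> S) = a" "the_elem (e - S) = b" "e \<inter> S \<noteq> {}"
proof -
  obtain a b where ab: "a \<in> V" "b \<in> V" "a \<noteq> b" "e = {a, b}" using edgeE assms by blast
  have nSS: "\<not> (a \<in> S \<and> b \<in> S)" using stabE assms ab(4) by blast
  show ?thesis
  proof (cases "a \<in> S")
    case True
    then have bT: "b \<in> T" using nSS ab(2) unfolding T_def by blast
    have e1: "e \<inter> S = {a}" using True bT ab(3,4) unfolding T_def by blast
    have e2: "e - S = {b}" using True bT ab(3,4) unfolding T_def by blast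
    show ?thesis by (rule ST[of a b]) (simp_all add: ab(4) True bT e1[unfolded ab(4)] e2[unfolded ab(4)])
  next
    case False
    show ?thesis
    proof (cases "b \<in> S")
      case True
      then have aT: "a \<in> T" using False ab(1) unfolding T_def by blast
      have e1: "e \<inter> S = {b}" using True aT ab(3,4) unfolding T_def by blast
      have e2: "e - S = {a}" using True aT ab(3,4) unfolding T_def by blast
      have e3: "e = {b, a}" using ab(4) by blast
      have e4: "the_elem (e \<inter> S) = b" "the_elem (e - S) = a" using e1 e2 by simp_all
      show ?thesis by (rule ST[of b a]) (use e3 e4 True aT e1 in simp_all)
    next
      case False2: False
      have "e \<inter> S = {}" using False False2 ab(4) by blast
      moreover have "a \<in> T" "b \<in> T" using False False2 ab(1,2) unfolding T_def by blast+
      ultimately show ?thesis using ab(3,4) by (intro TT[of a b])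
    qed
  qed
qed

lemma E_notL: assumes "e \<in> E" shows "e \<notin> Lm \<and> e \<notin> Lp"
proof (rule ccontr)
  obtain a b where ab: "a \<noteq> b" "e = {a, b}" using edgeE assms by blast
  assume "\<not> (e \<notin> Lm \<and> e \<notin> Lp)"
  then have "e \<in> Lm \<union> Lp" by auto
  then obtain i where "e = {i}" using loopE by blast
  then have "a = i" "b = i" using ab by auto
  then show False using ab by simp
qed

lemma Pair_cases:
  assumes "Pair e \<in> I"
  obtains (P) i where "e = {i}" "e \<in> Lp" "i \<in> S" "i \<in> V"
  | (M) i where "e = {i}" "e \<in> Lm" "e \<notin> Lp" "i \<in> V"
  | (Ed) "e \<in> E" "e \<notin> Lm" "e \<notin> Lp"
proof -
  have "e \<in> E \<union> Lm \<union> Lp" using assms Pair_I by blast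
  then show ?thesis
  proof (elim UnE)
    assume "e \<in> E" then show ?thesis using E_notL Ed by blast
  next
    assume m: "e \<in> Lm"
    then obtain i where "i \<in> V" "e = {i}" using loopE by blast
    then show ?thesis using M m LmLp by blast
  next
    assume p: "e \<in> Lp"
    then obtain i where "i \<in> V" "e = {i}" using loopE by blast
    then show ?thesis using P p LpS by blast
  qed
qed

end

lemma cvx_le:
  fixes x1 y1 x2 y2 a :: real
  assumes "x1 \<le> y1" "x2 \<le> y2" "0 \<le> a" "a \<le> 1"
  shows "a * x1 + (1-a) * x2 \<le> a * y1 + (1-a) * y2"
proof -
  have "a * x1 \<le> a * y1" using assms by (intro mult_left_mono) auto
  moreover have "(1-a) * x2 \<le> (1-a) * y2" using assms by (intro mult_left_mono) auto
  ultimately show ?thesis by linarith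
qed

context qpG begin

lemma PC_Node: "PC A (Node i) l u = (if i \<in> S then 0 \<le> u (Node i) \<and> u (Node i) \<le> l else u (Node i) = (if i \<in> A then l else 0))"
  by (simp add: PC_def)

lemma PC_Lp: "{i} \<in> Lp \<Longrightarrow> PC A (Pair {i}) l u = ((u (Node i))\<^sup>2 \<le> l * u (Pair {i}) \<and> 0 \<le> l \<and> 0 \<le> u (Pair {i}))"
  by (simp add: PC_def)

lemma PC_Lm: "{i} \<in> Lm \<Longrightarrow> PC A (Pair {i}) l u = (if i \<in> S then u (Pair {i}) \<le> u (Node i)
                          else u (Pair {i}) \<le> (if i \<in> A then l else 0))"
  using LmLp by (simp add: PC_def)

lemma PC_TT: "e \<in> E \<Longrightarrow> e \<inter> S = {} \<Longrightarrow> PC A (Pair e) l u = (u (Pair e) = (if e \<subseteq> A then l else 0))"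
  using E_notL by (simp add: PC_def)

lemma PC_ST: "e \<in> E \<Longrightarrow> the_elem (e \<inter> S) = a \<Longrightarrow> the_elem (e - S) = b \<Longrightarrow> e \<inter> S \<noteq> {} \<Longrightarrow>
    PC A (Pair e) l u = (u (Pair e) = (if b \<in> A then u (Node a) else 0))"
  using E_notL by (simp add: PC_def)

lemma R_Proj: "R \<subseteq> Proj"
proof
  fix z assume z: "z \<in> R"
  define As where "As = {j\<in>T. z (Node j) = 1}"
  have AsT: "As \<in> Pow T" by (auto simp: As_def)
  have zQ: "z \<in> Q" using z R_Q by blast
  have zn: "\<And>i. i \<in> V \<Longrightarrow> 0 \<le> z (Node i) \<and> z (Node i) \<le> 1"
    and zp: "\<And>i. {i} \<in> Lp \<Longrightarrow> z (Pair {i}) \<ge> (z (Node i))\<^sup>2"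
    and zm: "\<And>i. {i} \<in> Lm \<Longrightarrow> z (Pair {i}) \<le> z (Node i)"
    and ze: "\<And>p q. {p, q} \<in> E \<Longrightarrow> z (Pair {p, q}) = z (Node p) * z (Node q)"
    and zv: "vanish z"
    using zQ by (auto simp: Q_def)
  have zT: "\<And>j. j \<in> T \<Longrightarrow> z (Node j) = (if j \<in> As then 1 else 0)"
    using z by (auto simp: R_def As_def)
  have PC1: "PC As k 1 z" if k: "k \<in> I" for k
  proof (cases k)
    case (Node i)
    then have iV: "i \<in> V" using k Node_I by simp
    show ?thesis
    proof (cases "i \<in> S")
      case True then show ?thesis using zn[OF iV] Node by (simp add: PC_Node)
    next
      case False
      then have "i \<in> T" using iV by (simp add: T_def)
      then show ?thesis using zT False Node by (simp add: PC_Node)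
    qed
  next
    case (Pair e)
    then have eI: "Pair e \<in> I" using k by simp
    show ?thesis
    using eI proof (cases rule: Pair_cases)
      case (P i)
      have "0 \<le> (z (Node i))\<^sup>2" by simp
      have iLp: "{i} \<in> Lp" using P by simp
      then have "0 \<le> z (Pair {i})" using zp[OF iLp] \<open>0 \<le> (z (Node i))\<^sup>2\<close> by linarith
      then show ?thesis using zp[OF iLp] iLp P Pair by (simp add: PC_Lp)
    next
      case (M i)
      show ?thesis
      proof (cases "i \<in> S")
        case True then show ?thesis using zm[of i] M Pair by (simp add: PC_Lm)
      next
        case False
        then have "i \<in> T" using M by (simp add: T_def)
        then show ?thesis using zm[of i] zT[of i] M Pair False by (simp add: PC_Lm)
      qed
    next
      case Ed
      show ?thesis
      using Ed(1) proof (cases rule: edge_cases)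
        case (TT a b)
        have "z (Pair e) = z (Node a) * z (Node b)" using ze[of a b] TT Ed by simp
        then have "z (Pair e) = (if e \<subseteq> As then 1 else 0)"
          using zT[of a] zT[of b] TT by auto
        then show ?thesis using PC_TT[OF Ed(1) TT(5)] Pair by simp
      next
        case (ST a b)
        have "z (Pair e) = z (Node a) * z (Node b)" using ze[of a b] ST Ed by simp
        then have "z (Pair e) = (if b \<in> As then z (Node a) else 0)"
          using zT[of b] ST by auto
        then show ?thesis using PC_ST[OF Ed(1) ST(4,5,6)] Pair by simp
      qed
    qed
  qed
  have PC0: "PC A k 0 (\<lambda>_. 0)" for A k
    by (cases k) (simp_all add: PC_def)
  define l where "l A = (if A = As then 1 else 0::real)" for A
  define v where "v A = (if A = As then z else (\<lambda>_. 0))" for A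
  have "Feas z l v"
    unfolding Feas_def
  proof (intro conjI ballI)
    fix A k assume "A \<in> Pow T" "k \<in> I"
    then show "PC A k (l A) (v A)" using PC1 PC0 by (simp add: l_def v_def)
  next
    fix A assume "A \<in> Pow T" then show "0 \<le> l A" by (simp add: l_def)
  next
    fix k assume "k \<in> I"
    have "(\<Sum>A\<in>Pow T. v A k) = (\<Sum>A\<in>Pow T. if A = As then z k else 0)"
      by (rule sum.cong) (auto simp: v_def)
    also have "\<dots> = z k" using AsT finT by (simp add: sum.delta')
    finally show "z k = (\<Sum>A\<in>Pow T. v A k)" by simp
  next
    have "(\<Sum>A\<in>Pow T. l A) = (\<Sum>A\<in>Pow T. if A = As then 1 else 0)"
      by (simp add: l_def)
    also have "\<dots> = 1" using AsT finT by (simp add: sum.delta')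
    finally show "(\<Sum>A\<in>Pow T. l A) = 1" .
  qed
  then show "z \<in> Proj" using zv by (auto simp: Proj_def)
qed

end

context qpG begin

definition Rec :: "('a coord \<Rightarrow> real) \<Rightarrow> bool" where
  "Rec d \<longleftrightarrow> (\<forall>i\<in>V. d (Node i) = 0) \<and> (\<forall>e\<in>E. d (Pair e) = 0) \<and>
     (\<forall>i. {i} \<in> Lp \<longrightarrow> 0 \<le> d (Pair {i})) \<and> (\<forall>i. {i} \<in> Lm \<longrightarrow> d (Pair {i}) \<le> 0)"

lemma Rec_zero:
  assumes A: "A \<in> Pow T" and pc: "\<And>k. k \<in> I \<Longrightarrow> PC A k 0 u"
  shows "Rec u"
proof -
  have n: "u (Node i) = 0" if "i \<in> V" for i
  proof -
    have "PC A (Node i) 0 u" using pc that Node_I by blast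
    then show ?thesis by (auto simp: PC_Node split: if_splits)
  qed
  have e: "u (Pair e) = 0" if "e \<in> E" for e
  proof -
    have pe: "PC A (Pair e) 0 u" using pc that Pair_I by blast
    show ?thesis using that
    proof (cases rule: edge_cases)
      case (TT a b) then show ?thesis using pe PC_TT[OF that TT(5)] by simp
    next
      case (ST a b)
      then have "a \<in> V" using SV by blast
      then show ?thesis using pe PC_ST[OF that ST(4,5,6)] n by simp
    qed
  qed
  have p: "0 \<le> u (Pair {i})" if "{i} \<in> Lp" for i
  proof -
    have "PC A (Pair {i}) 0 u" using pc that Pair_I by blast
    then show ?thesis using that by (simp add: PC_Lp)
  qed
  have m: "u (Pair {i}) \<le> 0" if "{i} \<in> Lm" for i
  proof -
    have "PC A (Pair {i}) 0 u" using pc that Pair_I by blast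
    moreover have "i \<in> V" using that loopV by blast
    ultimately show ?thesis using that n by (simp add: PC_Lm split: if_splits)
  qed
  show ?thesis using n e p m by (simp add: Rec_def)
qed

lemma Rec_sum:
  assumes "finite F" "\<And>A. A \<in> F \<Longrightarrow> Rec (v A)"
  shows "Rec (\<lambda>k. \<Sum>A\<in>F. v A k)"
  using assms unfolding Rec_def
  by (auto intro!: sum_nonneg sum_nonpos)

lemma Rec_0: "Rec (\<lambda>_. 0)" by (simp add: Rec_def)

lemma PC_R:
  assumes A: "A \<in> Pow T" and l: "0 < l" and pc: "\<And>k. k \<in> I \<Longrightarrow> PC A k l u" and d: "Rec d"
  shows "(\<lambda>k. if k \<in> I then (u k + d k) / l else 0) \<in> R"
proof -
  define q where "q = (\<lambda>k. if k \<in> I then (u k + d k) / l else 0)"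
  have dn: "\<And>i. i \<in> V \<Longrightarrow> d (Node i) = 0" and de: "\<And>e. e \<in> E \<Longrightarrow> d (Pair e) = 0"
    and dp: "\<And>i. {i} \<in> Lp \<Longrightarrow> 0 \<le> d (Pair {i})" and dm: "\<And>i. {i} \<in> Lm \<Longrightarrow> d (Pair {i}) \<le> 0"
    using d by (auto simp: Rec_def)
  have qn: "q (Node i) = u (Node i) / l" if "i \<in> V" for i
    using that dn Node_I by (simp add: q_def)
  have qe: "q (Pair e) = u (Pair e) / l" if "e \<in> E" for e
    using that de Pair_I by (simp add: q_def)
  have qT: "q (Node j) = (if j \<in> A then 1 else 0)" if "j \<in> T" for j
  proof -
    have jV: "j \<in> V" "j \<notin> S" using that by (auto simp: T_def)
    then have "PC A (Node j) l u" using pc Node_I by blast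
    then show ?thesis using jV qn l by (simp add: PC_Node)
  qed
  have qS: "0 \<le> q (Node i) \<and> q (Node i) \<le> 1" if "i \<in> V" for i
  proof (cases "i \<in> S")
    case True
    have "PC A (Node i) l u" using that pc Node_I by blast
    then have "0 \<le> u (Node i)" "u (Node i) \<le> l" using True by (auto simp: PC_Node)
    then show ?thesis using qn[OF that] l by simp
  next
    case False
    then have "i \<in> T" using that by (simp add: T_def)
    then show ?thesis using qT by simp
  qed
  have qv: "vanish q" by (simp add: vanish_def q_def)
  have qp: "q (Pair {i}) \<ge> (q (Node i))\<^sup>2" if "{i} \<in> Lp" for i
  proof -
    have iV: "i \<in> V" using that loopV by blast
    have "PC A (Pair {i}) l u" using pc that Pair_I by blast
    then have h: "(u (Node i))\<^sup>2 \<le> l * u (Pair {i})" using that by (simp add: PC_Lp)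
    have "(q (Node i))\<^sup>2 = (u (Node i))\<^sup>2 / l\<^sup>2" using qn[OF iV] by (simp add: power_divide)
    also have "\<dots> \<le> (l * u (Pair {i})) / l\<^sup>2" using h l by (intro divide_right_mono) auto
    also have "\<dots> = u (Pair {i}) / l" using l by (simp add: power2_eq_square)
    also have "\<dots> \<le> (u (Pair {i}) + d (Pair {i})) / l" using dp[OF that] l by (intro divide_right_mono) auto
    also have "\<dots> = q (Pair {i})" using that Pair_I by (simp add: q_def)
    finally show ?thesis .
  qed
  have qm: "q (Pair {i}) \<le> q (Node i)" if "{i} \<in> Lm" for i
  proof -
    have iV: "i \<in> V" using that loopV by blast
    have pi: "PC A (Pair {i}) l u" using pc that Pair_I by blast
    have "q (Pair {i}) = (u (Pair {i}) + d (Pair {i})) / l" using that Pair_I by (simp add: q_def)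
    also have "\<dots> \<le> u (Pair {i}) / l" using dm[OF that] l by (intro divide_right_mono) auto
    finally have q1: "q (Pair {i}) \<le> u (Pair {i}) / l" .
    show ?thesis
    proof (cases "i \<in> S")
      case True
      then have "u (Pair {i}) \<le> u (Node i)" using pi that by (simp add: PC_Lm)
      then show ?thesis using q1 qn[OF iV] l by (smt (verit) divide_right_mono)
    next
      case False
      then have iT: "i \<in> T" using iV by (simp add: T_def)
      have "u (Pair {i}) \<le> (if i \<in> A then l else 0)" using pi that False by (simp add: PC_Lm)
      then have "u (Pair {i}) / l \<le> (if i \<in> A then 1 else 0)" using l by (auto simp: divide_le_eq)
      then show ?thesis using q1 qT[OF iT] by simp
    qed
  qed
  have qed_: "q (Pair {a, b}) = q (Node a) * q (Node b)" if "{a, b} \<in> E" for a b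
  proof -
    define e where "e = {a, b}"
    have eE: "e \<in> E" using that by (simp add: e_def)
    have pe: "PC A (Pair e) l u" using pc eE Pair_I by blast
    have sym: "q (Node a) * q (Node b) = q (Node a') * q (Node b')" if "e = {a', b'}" for a' b'
    proof -
      have "(a = a' \<and> b = b') \<or> (a = b' \<and> b = a')" using that by (simp add: e_def doubleton_eq_iff)
      then show ?thesis by auto
    qed
    have "q (Pair e) = q (Node a) * q (Node b)" using eE
    proof (cases rule: edge_cases)
      case (TT a' b')
      have "u (Pair e) = (if e \<subseteq> A then l else 0)" using pe PC_TT[OF eE TT(5)] by simp
      then have "q (Pair e) = (if e \<subseteq> A then 1 else 0)" using qe[OF eE] l by simp
      then show ?thesis using sym[OF TT(1)] qT[OF TT(2)] qT[OF TT(3)] TT(1) by auto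
    next
      case (ST a' b')
      have a'V: "a' \<in> V" using ST(2) SV by blast
      have "u (Pair e) = (if b' \<in> A then u (Node a') else 0)" using pe PC_ST[OF eE ST(4,5,6)] by simp
      then have "q (Pair e) = (if b' \<in> A then q (Node a') else 0)" using qe[OF eE] qn[OF a'V] by simp
      then show ?thesis using sym[OF ST(1)] qT[OF ST(3)] by auto
    qed
    then show ?thesis by (simp add: e_def)
  qed
  have "q \<in> Q" using qv qS qp qm qed_ by (simp add: Q_def)
  moreover have "\<forall>j\<in>T. q (Node j) = 0 \<or> q (Node j) = 1" using qT by simp
  ultimately show ?thesis by (simp add: R_def q_def)
qed

end

context qpG begin

lemma Proj_R: "Proj \<subseteq> conv_fun R"
proof
  fix z assume "z \<in> Proj"
  then obtain l v where zv: "vanish z" and F: "Feas z l v" by (auto simp: Proj_def)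
  have l0: "\<And>A. A \<in> Pow T \<Longrightarrow> 0 \<le> l A" and pcA: "\<And>A k. A \<in> Pow T \<Longrightarrow> k \<in> I \<Longrightarrow> PC A k (l A) (v A)"
    and zs: "\<And>k. k \<in> I \<Longrightarrow> z k = (\<Sum>A\<in>Pow T. v A k)" and ls: "(\<Sum>A\<in>Pow T. l A) = 1"
    using F by (auto simp: Feas_def)
  define P where "P = {A\<in>Pow T. 0 < l A}"
  have PT: "P \<subseteq> Pow T" by (auto simp: P_def)
  have finPT: "finite (Pow T)" using finT by simp
  have finP: "finite P" using PT finPT finite_subset by blast
  have lz: "l A = 0" if "A \<in> Pow T - P" for A using that l0[of A] by (auto simp: P_def)
  have sumP: "(\<Sum>A\<in>P. l A) = 1"
  proof -
    have "(\<Sum>A\<in>Pow T. l A) = (\<Sum>A\<in>P. l A)"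
      using finPT PT lz by (intro sum.mono_neutral_right) auto
    then show ?thesis using ls by simp
  qed
  then have "P \<noteq> {}" by auto
  then obtain A0 where A0: "A0 \<in> P" by blast
  define d where "d = (\<lambda>k. \<Sum>A\<in>Pow T - P. v A k)"
  have Rd: "Rec d" unfolding d_def
  proof (rule Rec_sum)
    show "finite (Pow T - P)" using finPT by simp
  next
    fix A assume A: "A \<in> Pow T - P"
    have lA: "l A = 0" using lz A by blast
    show "Rec (v A)" using A by (intro Rec_zero[of A]) (use pcA[of A] lA in auto)
  qed
  define dd where "dd A = (\<lambda>k. if A = A0 then d k else 0)" for A
  have Rdd: "Rec (dd A)" for A
  proof (cases "A = A0")
    case True then have "dd A = d" by (simp add: dd_def fun_eq_iff)
    then show ?thesis using Rd by simp
  next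
    case False then have "dd A = (\<lambda>_. 0)" by (simp add: dd_def fun_eq_iff)
    then show ?thesis using Rec_0 by simp
  qed
  define q where "q A = (\<lambda>k. if k \<in> I then (v A k + dd A k) / l A else 0)" for A
  have qR: "q A \<in> R" if "A \<in> P" for A
  proof -
    have "A \<in> Pow T" "0 < l A" using that by (auto simp: P_def)
    then show ?thesis unfolding q_def using pcA Rdd by (intro PC_R) auto
  qed
  have "(\<lambda>k. \<Sum>A\<in>P. l A * q A k) \<in> conv_fun R"
    using cvx_conv_fun finP sumP l0 qR conv_fun_sub[of R] PT by (intro cvx_sum) auto
  moreover have "z = (\<lambda>k. \<Sum>A\<in>P. l A * q A k)"
  proof
    fix k
    show "z k = (\<Sum>A\<in>P. l A * q A k)"
    proof (cases "k \<in> I")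
      case False
      then show ?thesis using zv by (simp add: vanish_def q_def)
    next
      case True
      have "(\<Sum>A\<in>P. l A * q A k) = (\<Sum>A\<in>P. v A k + dd A k)"
        using True by (intro sum.cong) (auto simp: q_def P_def)
      also have "\<dots> = (\<Sum>A\<in>P. v A k) + (\<Sum>A\<in>P. dd A k)" by (simp add: sum.distrib)
      also have "(\<Sum>A\<in>P. dd A k) = d k" using A0 finP by (simp add: dd_def)
      also have "(\<Sum>A\<in>P. v A k) + d k = (\<Sum>A\<in>Pow T. v A k)"
        using sum.subset_diff[OF PT finPT, of "\<lambda>A. v A k"] by (simp add: d_def)
      finally show ?thesis using zs[OF True] by simp
    qed
  qed
  ultimately show "z \<in> conv_fun R" by simp
qed

lemma PC_cvx:
  assumes h1: "PC A k l1 u1" and h2: "PC A k l2 u2" and a: "0 \<le> a" "a \<le> 1"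
  shows "PC A k (a * l1 + (1-a) * l2) (\<lambda>k. a * u1 k + (1-a) * u2 k)"
proof (cases k)
  case (Node i)
  show ?thesis
  proof (cases "i \<in> S")
    case True
    then have "0 \<le> u1 (Node i)" "u1 (Node i) \<le> l1" "0 \<le> u2 (Node i)" "u2 (Node i) \<le> l2"
      using h1 h2 Node by (auto simp: PC_Node)
    then have "a * 0 + (1-a) * 0 \<le> a * u1 (Node i) + (1-a) * u2 (Node i)"
      "a * u1 (Node i) + (1-a) * u2 (Node i) \<le> a * l1 + (1-a) * l2"
      using a by (intro cvx_le; simp)+
    then show ?thesis using True Node by (simp add: PC_Node)
  next
    case False
    then show ?thesis using h1 h2 Node by (simp add: PC_Node)
  qed
next
  case (Pair e)
  show ?thesis
  proof (cases "e \<in> Lp")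
    case True
    then obtain i where ei: "e = {i}" using loopE by blast
    have "(u1 (Node i))\<^sup>2 \<le> l1 * u1 (Pair {i})" "0 \<le> l1" "0 \<le> u1 (Pair {i})"
      "(u2 (Node i))\<^sup>2 \<le> l2 * u2 (Pair {i})" "0 \<le> l2" "0 \<le> u2 (Pair {i})"
      using h1 h2 Pair True ei by (auto simp: PC_Lp)
    moreover from this have "(a * u1 (Node i) + (1-a) * u2 (Node i))\<^sup>2 \<le> (a * l1 + (1-a) * l2) * (a * u1 (Pair {i}) + (1-a) * u2 (Pair {i}))"
      using a by (intro rsoc_cvx) auto
    moreover have "a * 0 + (1-a) * 0 \<le> a * l1 + (1-a) * l2"
      "a * 0 + (1-a) * 0 \<le> a * u1 (Pair {i}) + (1-a) * u2 (Pair {i})"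
      using a calculation by (intro cvx_le; simp)+
    ultimately show ?thesis using True ei Pair by (simp add: PC_Lp)
  next
    case nLp: False
    show ?thesis
    proof (cases "e \<in> Lm")
      case True
      then obtain i where ei: "e = {i}" using loopE by blast
      show ?thesis
      proof (cases "i \<in> S")
        case iS: True
        then have "u1 (Pair {i}) \<le> u1 (Node i)" "u2 (Pair {i}) \<le> u2 (Node i)"
          using h1 h2 Pair True ei by (auto simp: PC_Lm)
        then have "a * u1 (Pair {i}) + (1-a) * u2 (Pair {i}) \<le> a * u1 (Node i) + (1-a) * u2 (Node i)"
          using a by (intro cvx_le)
        then show ?thesis using iS True ei Pair by (simp add: PC_Lm)
      next
        case iS: False
        then have "u1 (Pair {i}) \<le> (if i \<in> A then l1 else 0)" "u2 (Pair {i}) \<le> (if i \<in> A then l2 else 0)"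
          using h1 h2 Pair True ei by (auto simp: PC_Lm)
        then have "a * u1 (Pair {i}) + (1-a) * u2 (Pair {i}) \<le> a * (if i \<in> A then l1 else 0) + (1-a) * (if i \<in> A then l2 else 0)"
          using a by (intro cvx_le)
        then show ?thesis using iS True ei Pair by (simp add: PC_Lm split: if_splits)
      qed
    next
      case nLm: False
      have ev: "PC A (Pair e) l u = (if e \<inter> S = {} then u (Pair e) = (if e \<subseteq> A then l else 0)
          else u (Pair e) = (if the_elem (e - S) \<in> A then u (Node (the_elem (e \<inter> S))) else 0))" for l u
        using nLp nLm by (simp add: PC_def)
      show ?thesis using h1 h2 unfolding Pair ev by (auto split: if_splits)
    qed
  qed
qed

lemma Proj_cvx: "cvx Proj"
  unfolding cvx_def
proof (intro ballI allI impI)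
  fix z1 z2 and a :: real assume z1: "z1 \<in> Proj" and z2: "z2 \<in> Proj" and a: "0 \<le> a \<and> a \<le> 1"
  obtain l1 v1 where v1: "vanish z1" "Feas z1 l1 v1" using z1 by (auto simp: Proj_def)
  obtain l2 v2 where v2: "vanish z2" "Feas z2 l2 v2" using z2 by (auto simp: Proj_def)
  define l where "l A = a * l1 A + (1-a) * l2 A" for A
  define v where "v A = (\<lambda>k. a * v1 A k + (1-a) * v2 A k)" for A
  let ?z = "\<lambda>k. a * z1 k + (1-a) * z2 k"
  have "Feas ?z l v" unfolding Feas_def
  proof (intro conjI ballI)
    fix A assume A: "A \<in> Pow T"
    have "a * 0 + (1-a) * 0 \<le> l A" unfolding l_def using A v1 v2 a by (intro cvx_le) (auto simp: Feas_def)
    then show "0 \<le> l A" by simp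
  next
    fix A k assume "A \<in> Pow T" "k \<in> I"
    then show "PC A k (l A) (v A)" unfolding l_def v_def using v1 v2 a
      by (intro PC_cvx) (auto simp: Feas_def)
  next
    fix k assume k: "k \<in> I"
    then show "?z k = (\<Sum>A\<in>Pow T. v A k)" using v1 v2
      by (simp add: Feas_def v_def sum.distrib sum_distrib_left)
  next
    show "(\<Sum>A\<in>Pow T. l A) = 1" using v1 v2
      by (simp add: Feas_def l_def sum.distrib sum_distrib_left[symmetric])
  qed
  moreover have "vanish ?z" using v1 v2 by (simp add: vanish_def)
  ultimately show "?z \<in> Proj" by (auto simp: Proj_def)
qed

lemma QP_eq: "QP V E Lm Lp = Proj"
proof
  have cR: "conv_fun R \<subseteq> Proj" by (rule conv_fun_min[OF R_Proj Proj_cvx])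
  have "Gen \<subseteq> conv_fun R"
    using Gen_Q Q_hull conv_fun_mono[of "Gen \<inter> R" R] by blast
  then have "Gen \<subseteq> Proj" using cR by blast
  then show "QP V E Lm Lp \<subseteq> Proj" unfolding QP_Gen by (rule conv_fun_min[OF _ Proj_cvx])
next
  have "R \<subseteq> conv_fun Gen"
    using R_Q Q_hull conv_fun_mono[of "Gen \<inter> R" Gen] by blast
  then have "conv_fun R \<subseteq> conv_fun Gen" by (rule conv_fun_min[OF _ cvx_conv_fun])
  then show "Proj \<subseteq> QP V E Lm Lp" unfolding QP_Gen using Proj_R by blast
qed

end

definition fW :: "nat \<Rightarrow> 'i affform" where "fW j = (\<lambda>_. 0, \<lambda>t. if t = j then 1 else 0, 0)"
definition fX :: "'i \<Rightarrow> 'i affform" where "fX k = (\<lambda>i. if i = k then 1 else 0, \<lambda>_. 0, 0)"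
definition fadd :: "'i affform \<Rightarrow> 'i affform \<Rightarrow> 'i affform" where
  "fadd f g = (\<lambda>i. fst f i + fst g i, \<lambda>j. fst (snd f) j + fst (snd g) j, snd (snd f) + snd (snd g))"
definition fsc :: "real \<Rightarrow> 'i affform \<Rightarrow> 'i affform" where
  "fsc r f = (\<lambda>i. r * fst f i, \<lambda>j. r * fst (snd f) j, r * snd (snd f))"
definition fconst :: "real \<Rightarrow> 'i affform" where "fconst r = (\<lambda>_. 0, \<lambda>_. 0, r)"
definition fsum :: "('s \<Rightarrow> 'i affform) \<Rightarrow> 's set \<Rightarrow> 'i affform" where
  "fsum G F = (\<lambda>i. \<Sum>s\<in>F. fst (G s) i, \<lambda>j. \<Sum>s\<in>F. fst (snd (G s)) j, \<Sum>s\<in>F. snd (snd (G s)))"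

lemma aff_eval_alt: "aff_eval I p f x w = (\<Sum>i\<in>I. fst f i * x i) + (\<Sum>j<p. fst (snd f) j * w j) + snd (snd f)"
  by (cases f) (simp add: aff_eval_def)

lemma ev_fW: "aff_eval I p (fW j) x w = (if j < p then w j else 0)"
proof -
  have "(\<Sum>t<p. (if t = j then 1 else 0) * w t) = (\<Sum>t<p. if t = j then w t else 0)"
    by (intro sum.cong) auto
  also have "\<dots> = (if j < p then w j else 0)" by (simp add: sum.delta')
  finally show ?thesis by (simp add: aff_eval_alt fW_def)
qed

lemma ev_fX: "finite I \<Longrightarrow> aff_eval I p (fX k) x w = (if k \<in> I then x k else 0)"
proof -
  assume fin: "finite I"
  have "(\<Sum>i\<in>I. (if i = k then 1 else 0) * x i) = (\<Sum>i\<in>I. if i = k then x i else 0)"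
    by (intro sum.cong) auto
  also have "\<dots> = (if k \<in> I then x k else 0)" using fin by (simp add: sum.delta')
  finally show ?thesis by (simp add: aff_eval_alt fX_def)
qed

lemma ev_fadd: "aff_eval I p (fadd f g) x w = aff_eval I p f x w + aff_eval I p g x w"
  by (simp add: aff_eval_alt fadd_def sum.distrib algebra_simps)

lemma ev_fsc: "aff_eval I p (fsc r f) x w = r * aff_eval I p f x w"
  by (simp add: aff_eval_alt fsc_def sum_distrib_left algebra_simps)

lemma ev_fconst: "aff_eval I p (fconst r) x w = r"
  by (simp add: aff_eval_alt fconst_def)

lemma ev_fsum: "aff_eval I p (fsum G F) x w = (\<Sum>s\<in>F. aff_eval I p (G s) x w)"
proof -
  have 1: "(\<Sum>i\<in>I. (\<Sum>s\<in>F. fst (G s) i) * x i) = (\<Sum>s\<in>F. \<Sum>i\<in>I. fst (G s) i * x i)"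
    by (simp add: sum_distrib_right sum.swap[of _ I])
  have 2: "(\<Sum>j<p. (\<Sum>s\<in>F. fst (snd (G s)) j) * w j) = (\<Sum>s\<in>F. \<Sum>j<p. fst (snd (G s)) j * w j)"
    by (simp add: sum_distrib_right sum.swap[of _ "{..<p}"])
  show ?thesis by (simp add: aff_eval_alt fsum_def 1 2 sum.distrib)
qed

lemmas ev_simps = ev_fW ev_fX ev_fadd ev_fsc ev_fconst ev_fsum

definition cEq :: "'i affform \<Rightarrow> 'i affform \<Rightarrow> 'i soc_constr list" where
  "cEq f g = [LinIneq (fadd f (fsc (-1) g)), LinIneq (fadd g (fsc (-1) f))]"
definition cLe :: "'i affform \<Rightarrow> 'i affform \<Rightarrow> 'i soc_constr list" where
  "cLe f g = [LinIneq (fadd g (fsc (-1) f))]"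

lemma sat_cEq: "(\<forall>c\<in>set (cEq f g). soc_sat I p c x w) \<longleftrightarrow> aff_eval I p f x w = aff_eval I p g x w"
  by (auto simp: cEq_def ev_fadd ev_fsc)

lemma sat_cLe: "(\<forall>c\<in>set (cLe f g). soc_sat I p c x w) \<longleftrightarrow> aff_eval I p f x w \<le> aff_eval I p g x w"
  by (auto simp: cLe_def ev_fadd ev_fsc)

lemma sum_list_le_const:
  fixes f :: "'b \<Rightarrow> nat"
  shows "(\<And>x. x \<in> set xs \<Longrightarrow> f x \<le> c) \<Longrightarrow> sum_list (map f xs) \<le> length xs * c"
  by (induction xs) (auto simp: add_mono)

context qpG begin

definition "m = card I"
definition "MM = m + 1"
definition "NN = card (Pow T)"
definition "pp = NN * MM"
definition "fI = (SOME h. bij_betw h I {0..<m})"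
definition "fP = (SOME h. bij_betw h (Pow T) {0..<NN})"
definition "As = (SOME xs. set xs = Pow T \<and> distinct xs)"
definition "Ks = (SOME xs. set xs = I \<and> distinct xs)"

lemma fI_bij: "bij_betw fI I {0..<m}"
  unfolding fI_def m_def using ex_bij_betw_finite_nat[OF finI] by (rule someI_ex)
lemma finPT: "finite (Pow T)" using finT by simp
lemma fP_bij: "bij_betw fP (Pow T) {0..<NN}"
  unfolding fP_def NN_def using ex_bij_betw_finite_nat[OF finPT] by (rule someI_ex)
lemma As_prop: "set As = Pow T \<and> distinct As"
  unfolding As_def using finite_distinct_list[OF finPT] by (rule someI_ex)
lemma Ks_prop: "set Ks = I \<and> distinct Ks"
  unfolding Ks_def using finite_distinct_list[OF finI] by (rule someI_ex)
lemma len_As: "length As = NN"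
  using As_prop distinct_card[of As] by (simp add: NN_def)
lemma len_Ks: "length Ks = m"
  using Ks_prop distinct_card[of Ks] by (simp add: m_def)

lemma fI_lt: "k \<in> I \<Longrightarrow> fI k < m" using fI_bij by (auto simp: bij_betw_def)
lemma fP_lt: "A \<in> Pow T \<Longrightarrow> fP A < NN" using fP_bij by (auto simp: bij_betw_def)
lemma fI_inv: "k \<in> I \<Longrightarrow> inv_into I fI (fI k) = k" using fI_bij by (auto simp: bij_betw_def)
lemma fP_inv: "A \<in> Pow T \<Longrightarrow> inv_into (Pow T) fP (fP A) = A"
  using fP_bij by (simp add: bij_betw_def inv_into_f_f)

definition "lidx A = fP A * MM"
definition "vidx A k = fP A * MM + (1 + fI k)"

lemma idx_lt: assumes "A \<in> Pow T" "k \<in> I" shows "lidx A < pp" "vidx A k < pp"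
proof -
  have a: "fP A + 1 \<le> NN" using fP_lt[OF assms(1)] by simp
  have b: "1 + fI k < MM" using fI_lt[OF assms(2)] by (simp add: MM_def)
  have "(fP A + 1) * MM \<le> NN * MM" using a by (rule mult_right_mono) simp
  then have c: "fP A * MM + MM \<le> NN * MM" by (simp add: algebra_simps)
  show "vidx A k < pp" unfolding vidx_def pp_def using b c by linarith
  show "lidx A < pp" unfolding lidx_def pp_def using b c by linarith
qed

lemma lidx_lt: assumes "A \<in> Pow T" shows "lidx A < pp"
proof -
  have "fP A < NN" using fP_lt[OF assms] .
  then have "fP A * MM < NN * MM" unfolding MM_def by (rule mult_strict_right_mono) simp
  then show ?thesis by (simp add: lidx_def pp_def)
qed

definition "LF A = fW (lidx A)"
definition "VF A k = fW (vidx A k)"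

definition pc :: "'a set \<Rightarrow> 'a coord \<Rightarrow> 'a coord soc_constr list" where
 "pc A k = (case k of
    Node i \<Rightarrow> (if i \<in> S then cLe (fconst 0) (VF A k) @ cLe (VF A k) (LF A)
               else cEq (VF A k) (fsc (if i \<in> A then 1 else 0) (LF A)))
  | Pair e \<Rightarrow> (if e \<in> Lp then [RSOC [VF A (Node (the_elem e))] (LF A) (fsc (1/2) (VF A k))]
     else if e \<in> Lm then (if the_elem e \<in> S then cLe (VF A k) (VF A (Node (the_elem e)))
                          else cLe (VF A k) (fsc (if the_elem e \<in> A then 1 else 0) (LF A)))
     else if e \<inter> S = {} then cEq (VF A k) (fsc (if e \<subseteq> A then 1 else 0) (LF A))
     else cEq (VF A k) (fsc (if the_elem (e - S) \<in> A then 1 else 0) (VF A (Node (the_elem (e \<inter> S)))))))"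

definition "piece A = LinIneq (LF A) # concat (map (pc A) Ks)"
definition "coup k = cEq (fX k) (fsum (\<lambda>A. VF A k) (Pow T))"
definition "tot = cEq (fsum LF (Pow T)) (fconst 1)"
definition "cs = concat (map piece As) @ concat (map coup Ks) @ tot"

lemma len_pc: "length (pc A k) \<le> 2"
  by (cases k) (simp_all add: pc_def cEq_def cLe_def)

lemma len_cs: "length cs \<le> NN * (1 + 2 * m) + 2 * m + 2"
proof -
  have "length (piece A) \<le> 1 + 2 * m" for A
  proof -
    have "sum_list (map (length \<circ> pc A) Ks) \<le> length Ks * 2"
      by (rule sum_list_le_const) (simp add: len_pc)
    then show ?thesis by (simp add: piece_def length_concat len_Ks)
  qed
  then have "sum_list (map (length \<circ> piece) As) \<le> length As * (1 + 2 * m)"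
    by (intro sum_list_le_const) simp
  moreover have "sum_list (map (length \<circ> coup) Ks) \<le> length Ks * 2"
    by (intro sum_list_le_const) (simp add: coup_def cEq_def)
  ultimately show ?thesis by (simp add: cs_def length_concat len_As len_Ks tot_def cEq_def)
qed

end

context qpG begin

lemma evL: "A \<in> Pow T \<Longrightarrow> aff_eval I pp (LF A) x w = w (lidx A)"
  using lidx_lt by (simp add: LF_def ev_fW)
lemma evV: "A \<in> Pow T \<Longrightarrow> k \<in> I \<Longrightarrow> aff_eval I pp (VF A k) x w = w (vidx A k)"
  using idx_lt by (simp add: VF_def ev_fW)

lemma pc_sem:
  assumes A: "A \<in> Pow T" and k: "k \<in> I"
  shows "(\<forall>c\<in>set (pc A k). soc_sat I pp c x w) \<longleftrightarrow> PC A k (w (lidx A)) (\<lambda>k'. w (vidx A k'))"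
proof (cases k)
  case (Node i)
  then have iV: "Node i \<in> I" using k by simp
  show ?thesis
  proof (cases "i \<in> S")
    case True
    then show ?thesis using Node A iV
      by (simp add: pc_def PC_Node sat_cLe evL evV ev_fconst ball_Un del: ball_simps)
  next
    case False
    then show ?thesis using Node A iV
      by (simp add: pc_def PC_Node sat_cEq evL evV ev_fsc)
  qed
next
  case (Pair e)
  have eI: "Pair e \<in> I" using k Pair by simp
  show ?thesis using eI
  proof (cases rule: Pair_cases)
    case (P i)
    then have nI: "Node i \<in> I" using Node_I by simp
    show ?thesis using P Pair A nI eI
      by (simp add: pc_def PC_Lp evL evV ev_fsc)
  next
    case (M i)
    then have nI: "Node i \<in> I" using Node_I by simp
    show ?thesis using M Pair A nI eI
      by (simp add: pc_def PC_Lm sat_cLe evL evV ev_fsc)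
  next
    case Ed
    show ?thesis using Ed(1)
    proof (cases rule: edge_cases)
      case (TT a b)
      show ?thesis using TT(5) Ed Pair A eI
        by (simp add: pc_def PC_TT[OF Ed(1) TT(5)] sat_cEq evL evV ev_fsc)
    next
      case (ST a b)
      have "a \<in> V" using ST(2) SV by blast
      then have nI: "Node a \<in> I" using Node_I by simp
      show ?thesis using ST(4,5,6) Ed Pair A eI nI
        by (simp add: pc_def PC_ST[OF Ed(1) ST(4,5,6)] sat_cEq evL evV ev_fsc)
    qed
  qed
qed

lemma sat_all:
  "(\<forall>c\<in>set cs. soc_sat I pp c x w) \<longleftrightarrow> Feas x (\<lambda>A. w (lidx A)) (\<lambda>A k. w (vidx A k))"
proof -
  have p: "(\<forall>c\<in>set (concat (map piece As)). soc_sat I pp c x w) \<longleftrightarrow>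
      (\<forall>A\<in>Pow T. 0 \<le> w (lidx A) \<and> (\<forall>k\<in>I. PC A k (w (lidx A)) (\<lambda>k'. w (vidx A k'))))"
  proof -
    have "(\<forall>c\<in>set (concat (map piece As)). soc_sat I pp c x w) \<longleftrightarrow>
        (\<forall>A\<in>set As. \<forall>c\<in>set (piece A). soc_sat I pp c x w)" by auto
    also have "\<dots> \<longleftrightarrow> (\<forall>A\<in>Pow T. \<forall>c\<in>set (piece A). soc_sat I pp c x w)" using As_prop by simp
    also have "\<dots> \<longleftrightarrow> (\<forall>A\<in>Pow T. 0 \<le> w (lidx A) \<and> (\<forall>k\<in>I. PC A k (w (lidx A)) (\<lambda>k'. w (vidx A k'))))"
    proof (intro ball_cong refl)
      fix A assume A: "A \<in> Pow T"
      have "(\<forall>c\<in>set (piece A). soc_sat I pp c x w) \<longleftrightarrow>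
          soc_sat I pp (LinIneq (LF A)) x w \<and> (\<forall>k\<in>set Ks. \<forall>c\<in>set (pc A k). soc_sat I pp c x w)"
        by (auto simp: piece_def)
      also have "\<dots> \<longleftrightarrow> 0 \<le> w (lidx A) \<and> (\<forall>k\<in>I. PC A k (w (lidx A)) (\<lambda>k'. w (vidx A k')))"
        using Ks_prop A pc_sem[OF A] by (simp add: evL)
      finally show "(\<forall>c\<in>set (piece A). soc_sat I pp c x w) \<longleftrightarrow> 0 \<le> w (lidx A) \<and> (\<forall>k\<in>I. PC A k (w (lidx A)) (\<lambda>k'. w (vidx A k')))" .
    qed
    finally show ?thesis .
  qed
  have c: "(\<forall>c\<in>set (concat (map coup Ks)). soc_sat I pp c x w) \<longleftrightarrow>
      (\<forall>k\<in>I. x k = (\<Sum>A\<in>Pow T. w (vidx A k)))"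
  proof -
    have "(\<forall>c\<in>set (concat (map coup Ks)). soc_sat I pp c x w) \<longleftrightarrow>
        (\<forall>k\<in>I. \<forall>c\<in>set (coup k). soc_sat I pp c x w)" using Ks_prop by auto
    also have "\<dots> \<longleftrightarrow> (\<forall>k\<in>I. x k = (\<Sum>A\<in>Pow T. w (vidx A k)))"
    proof (intro ball_cong refl)
      fix k assume k: "k \<in> I"
      have "(\<Sum>A\<in>Pow T. aff_eval I pp (VF A k) x w) = (\<Sum>A\<in>Pow T. w (vidx A k))"
        using k evV by (intro sum.cong) auto
      then show "(\<forall>c\<in>set (coup k). soc_sat I pp c x w) \<longleftrightarrow> x k = (\<Sum>A\<in>Pow T. w (vidx A k))"
        using k finI by (simp add: coup_def sat_cEq ev_fX ev_fsum)
    qed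
    finally show ?thesis .
  qed
  have t: "(\<forall>c\<in>set tot. soc_sat I pp c x w) \<longleftrightarrow> (\<Sum>A\<in>Pow T. w (lidx A)) = 1"
  proof -
    have "(\<Sum>A\<in>Pow T. aff_eval I pp (LF A) x w) = (\<Sum>A\<in>Pow T. w (lidx A))"
      using evL by (intro sum.cong) auto
    then show ?thesis by (simp add: tot_def sat_cEq ev_fsum ev_fconst)
  qed
  show ?thesis unfolding cs_def set_append ball_Un p c t Feas_def by blast
qed

lemma PC_cong:
  assumes k: "k \<in> I" and u: "\<And>k'. k' \<in> I \<Longrightarrow> u k' = u' k'"
  shows "PC A k l u = PC A k l u'"
proof (cases k)
  case (Node i)
  then show ?thesis using u k by (simp add: PC_Node)
next
  case (Pair e)
  have eI: "Pair e \<in> I" using k Pair by simp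
  show ?thesis using eI
  proof (cases rule: Pair_cases)
    case (P i)
    then have "Node i \<in> I" using Node_I by simp
    then show ?thesis using P Pair u eI by (simp add: PC_Lp)
  next
    case (M i)
    then have "Node i \<in> I" using Node_I by simp
    then show ?thesis using M Pair u eI by (simp add: PC_Lm)
  next
    case Ed
    show ?thesis using Ed(1)
    proof (cases rule: edge_cases)
      case (TT a b)
      show ?thesis using TT(5) Ed Pair u eI by (simp add: PC_TT[OF Ed(1) TT(5)])
    next
      case (ST a b)
      have "a \<in> V" using ST(2) SV by blast
      then have nI: "Node a \<in> I" using Node_I by simp
      show ?thesis using ST(4,5,6) Ed Pair u eI nI by (simp add: PC_ST[OF Ed(1) ST(4,5,6)])
    qed
  qed
qed

lemma Feas_cong:
  assumes "Feas z l v" and "\<And>A. A \<in> Pow T \<Longrightarrow> l' A = l A" and "\<And>A k. A \<in> Pow T \<Longrightarrow> k \<in> I \<Longrightarrow> v' A k = v A k"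
  shows "Feas z l' v'"
proof -
  have "PC A k (l' A) (v' A) = PC A k (l A) (v A)" if "A \<in> Pow T" "k \<in> I" for A k
    using that assms(2,3) PC_cong[of k "v' A" "v A" A "l A"] by simp
  moreover have "(\<Sum>A\<in>Pow T. v' A k) = (\<Sum>A\<in>Pow T. v A k)" if "k \<in> I" for k
    using that assms(3) by (intro sum.cong) auto
  moreover have "(\<Sum>A\<in>Pow T. l' A) = (\<Sum>A\<in>Pow T. l A)"
    using assms(2) by (intro sum.cong) auto
  ultimately show ?thesis using assms(1,2) unfolding Feas_def by auto
qed

definition enc :: "('a set \<Rightarrow> real) \<Rightarrow> ('a set \<Rightarrow> 'a coord \<Rightarrow> real) \<Rightarrow> nat \<Rightarrow> real" where
  "enc l v j = (if j mod MM = 0 then l (inv_into (Pow T) fP (j div MM))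
     else v (inv_into (Pow T) fP (j div MM)) (inv_into I fI (j mod MM - 1)))"

lemma MM_pos: "0 < MM" by (simp add: MM_def)

lemma enc_l: assumes "A \<in> Pow T" shows "enc l v (lidx A) = l A"
proof -
  have "lidx A mod MM = 0" "lidx A div MM = fP A" using MM_pos by (simp_all add: lidx_def)
  then show ?thesis using fP_inv[OF assms] by (simp add: enc_def)
qed

lemma enc_v: assumes "A \<in> Pow T" "k \<in> I" shows "enc l v (vidx A k) = v A k"
proof -
  have b: "1 + fI k < MM" using fI_lt[OF assms(2)] by (simp add: MM_def)
  have "vidx A k mod MM = (1 + fI k) mod MM" "vidx A k div MM = fP A + (1 + fI k) div MM"
    unfolding vidx_def using MM_pos by (simp_all only: mod_mult_self3 div_mult_self3 neq0_conv)
  then have "vidx A k mod MM = 1 + fI k" "vidx A k div MM = fP A"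
    using b by simp_all
  then show ?thesis using fP_inv[OF assms(1)] fI_inv[OF assms(2)] by (simp add: enc_def)
qed

lemma QP_rep: "QP V E Lm Lp = {x. (\<forall>k. k \<notin> I \<longrightarrow> x k = 0) \<and> (\<exists>w. \<forall>con\<in>set cs. soc_sat I pp con x w)}"
proof -
  have "(\<exists>l v. Feas x l v) \<longleftrightarrow> (\<exists>w. \<forall>con\<in>set cs. soc_sat I pp con x w)" for x
  proof
    assume "\<exists>l v. Feas x l v"
    then obtain l v where F: "Feas x l v" by blast
    have "Feas x (\<lambda>A. enc l v (lidx A)) (\<lambda>A k. enc l v (vidx A k))"
      using F by (rule Feas_cong) (simp_all add: enc_l enc_v)
    then show "\<exists>w. \<forall>con\<in>set cs. soc_sat I pp con x w" using sat_all by blast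
  next
    assume "\<exists>w. \<forall>con\<in>set cs. soc_sat I pp con x w"
    then show "\<exists>l v. Feas x l v" using sat_all by blast
  qed
  then show ?thesis unfolding QP_eq Proj_def vanish_def by blast
qed

lemma soc_rep_QP: "soc_rep I (m + pp) (NN * (1 + 2 * m) + 2 * m + 2) (QP V E Lm Lp)"
  unfolding soc_rep_def using QP_rep len_cs by (intro exI[of _ pp] exI[of _ cs]) (simp add: m_def)

end

context qpG begin

lemma card_I_le: "m \<le> card V * card V + 2 * card V"
proof -
  have cE: "card E \<le> card V * card V"
  proof -
    have "E \<subseteq> (\<lambda>(i,j). {i,j}) ` (V \<times> V)" using edgeE by fastforce
    then have "card E \<le> card ((\<lambda>(i,j). {i,j}) ` (V \<times> V))" using finV by (intro card_mono) auto
    also have "\<dots> \<le> card (V \<times> V)" by (rule card_image_le) (use finV in simp)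
    finally show ?thesis by (simp add: card_cartesian_product)
  qed
  have cL: "card (Lm \<union> Lp) \<le> card V"
  proof -
    have "Lm \<union> Lp \<subseteq> (\<lambda>i. {i}) ` V" using loopE by fastforce
    then have "card (Lm \<union> Lp) \<le> card ((\<lambda>i. {i}) ` V)" using finV by (intro card_mono) auto
    also have "\<dots> \<le> card V" by (rule card_image_le) (use finV in simp)
    finally show ?thesis .
  qed
  have "card I \<le> card (Node ` V) + card (Pair ` (E \<union> Lm \<union> Lp))"
    unfolding I_def QP_index_def by (rule card_Un_le)
  also have "\<dots> \<le> card V + card (E \<union> (Lm \<union> Lp))"
    using card_image_le[OF finV, of Node] card_image_le[of "E \<union> Lm \<union> Lp" Pair] finE finL
    by (simp add: Un_assoc)
  also have "\<dots> \<le> card V + (card E + card (Lm \<union> Lp))" using card_Un_le[of E "Lm \<union> Lp"] by simp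
  finally show ?thesis using cE cL by (simp add: m_def)
qed

lemma NN_eq: "NN = 2 ^ card T" using finT by (simp add: NN_def card_Pow)

end

theorem proposition10:
  fixes c :: real
  assumes "c > 0"
  shows "\<exists>P :: real poly. \<forall>(V :: 'a set) E Lm Lp S.
    graph_with_loops V E Lm Lp \<and> stable_set V E S \<and>
    {i\<in>V. {i, i} \<in> Lp} \<subseteq> S \<and>
    real (card (V - S)) \<le> c * ln (real (card V))
    \<longrightarrow> (\<exists>nv nc. soc_rep (QP_index V E Lm Lp) nv nc (QP V E Lm Lp) \<and>
                 real nv \<le> poly P (real (card V)) \<and> real nc \<le> poly P (real (card V)))"
proof -
  define K where "K = nat \<lceil>c * ln 2\<rceil>"
  define P :: "real poly" where "P = smult 2 (([:2:] + monom 1 K) * [:1, 1:] ^ 2)"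
  have polyP: "poly P x = 2 * (2 + x ^ K) * (1 + x) ^ 2" for x
    by (simp add: P_def poly_monom)
  show ?thesis
  proof (intro exI[of _ P] allI impI)
    fix V :: "'a set" and E Lm Lp S
    assume h: "graph_with_loops V E Lm Lp \<and> stable_set V E S \<and> {i\<in>V. {i, i} \<in> Lp} \<subseteq> S \<and>
      real (card (V - S)) \<le> c * ln (real (card V))"
    interpret qpG V E Lm Lp S using h by unfold_locales auto
    define n where "n = card V"
    define x where "x = real n"
    have tb: "real (card T) \<le> c * ln x" using h by (simp add: T_def x_def n_def)
    have x0: "0 \<le> x" by (simp add: x_def)
    have Nb: "real NN \<le> 1 + x ^ K"
    proof (cases "card T = 0")
      case True then show ?thesis using x0 by (simp add: NN_eq)
    next
      case False
      then have "1 \<le> real (card T)" by simp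
      then have c1: "1 \<le> c * ln x" using tb by linarith
      have lnx: "0 < ln x"
      proof (rule ccontr)
        assume "\<not> 0 < ln x"
        then have "c * ln x \<le> 0" using assms by (simp add: mult_nonneg_nonpos)
        then show False using c1 by linarith
      qed
      have xpos: "0 < x"
      proof (rule ccontr)
        assume "\<not> 0 < x" then have "x = 0" using x0 by simp
        then show False using lnx by simp
      qed
      have "ln (2 ^ card T) = real (card T) * ln 2" by (rule ln_realpow)
      also have "\<dots> \<le> (c * ln x) * ln 2" using tb by (intro mult_right_mono) auto
      also have "\<dots> = (c * ln 2) * ln x" by simp
      also have "\<dots> \<le> real K * ln x" unfolding K_def
        using lnx real_nat_ceiling_ge[of "c * ln 2"] by (intro mult_right_mono) auto
      also have "\<dots> = ln (x ^ K)" by (simp add: ln_realpow)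
      finally have "ln (2 ^ card T) \<le> ln (x ^ K)" .
      then have "(2::real) ^ card T \<le> x ^ K" using xpos by simp
      then show ?thesis by (simp add: NN_eq)
    qed
    have mb: "real m + 1 \<le> (1 + x) ^ 2"
    proof -
      have "m \<le> n * n + 2 * n" using card_I_le by (simp add: n_def)
      then have "real m \<le> real (n * n + 2 * n)" by (simp only: of_nat_le_iff)
      then have "real m \<le> x * x + 2 * x" by (simp add: x_def)
      then show ?thesis by (simp add: power2_eq_square algebra_simps)
    qed
    have base: "(real NN + 1) * (real m + 1) \<le> (2 + x ^ K) * (1 + x) ^ 2"
      using Nb mb by (intro mult_mono) auto
    have nv: "real (m + pp) \<le> poly P x"
    proof -
      have "m + pp \<le> (NN + 1) * (m + 1)" by (simp add: pp_def MM_def algebra_simps)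
      then have "real (m + pp) \<le> real ((NN + 1) * (m + 1))" by (simp only: of_nat_le_iff)
      then have "real (m + pp) \<le> (real NN + 1) * (real m + 1)" by (simp only: of_nat_add of_nat_mult of_nat_1)
      also have "\<dots> \<le> (2 + x ^ K) * (1 + x) ^ 2" by (rule base)
      also have "\<dots> \<le> poly P x" unfolding polyP using x0 by simp
      finally show ?thesis .
    qed
    have nc: "real (NN * (1 + 2 * m) + 2 * m + 2) \<le> poly P x"
    proof -
      have "NN * (1 + 2 * m) + 2 * m + 2 \<le> 2 * ((NN + 1) * (m + 1))" by (simp add: algebra_simps)
      then have "real (NN * (1 + 2 * m) + 2 * m + 2) \<le> real (2 * ((NN + 1) * (m + 1)))" by (simp only: of_nat_le_iff)
      then have "real (NN * (1 + 2 * m) + 2 * m + 2) \<le> 2 * ((real NN + 1) * (real m + 1))" by (simp only: of_nat_add of_nat_mult of_nat_1 of_nat_numeral)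
      also have "\<dots> \<le> 2 * ((2 + x ^ K) * (1 + x) ^ 2)" using base by simp
      also have "\<dots> = poly P x" unfolding polyP by simp
      finally show ?thesis .
    qed
    show "\<exists>nv nc. soc_rep (QP_index V E Lm Lp) nv nc (QP V E Lm Lp) \<and>
                 real nv \<le> poly P (real (card V)) \<and> real nc \<le> poly P (real (card V))"
      using soc_rep_QP nv nc unfolding I_def x_def n_def by blast
  qed
qed

end
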